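(* Let $1\le k<n$ and $A\in\mathbb{M}_n$. Then $$\mathcal{P}(A)=\bigcup\{e^{i\theta}S(P):\ \theta\in[0,2\pi),\ P \text{ a rank-}k\text{ orthogonal projection with } |\operatorname{tr}(AP)|=w_k(A)\}.$$
   Context: For $A\in\mathbb{M}_n$: $W_k(A)=\{\operatorname{tr}(AP): P=P^*=P^2,\operatorname{tr}P=k\}$, $w_k(A)=\max\{|z|:z\in W_k(A)\}$. $A\parallel B$ means $w_k(A+\mu B)=w_k(A)+w_k(B)$ for some $|\mu|=1$. $\mathcal{P}(A)=\{B\in\mathbb{M}_n: B\parallel A\}$. For a rank-$k$ orthogonal projection $P$, $S(P)=\{B\in\mathbb{M}_n:\operatorname{tr}(BP)=w_k(B)\}$. *)

theory Defs
  imports "HOL-Analysis.Analysis"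
begin

text \<open>Complex n x n matrices are modelled as complex^'n^'n (n = CARD('n)).\<close>

definition cmat_adj :: "complex^'n^'n \<Rightarrow> complex^'n^'n" where
  "cmat_adj A = (\<chi> i j. cnj (A $ j $ i))"

definition cmat_scale :: "complex \<Rightarrow> complex^'n^'n \<Rightarrow> complex^'n^'n" where
  "cmat_scale c A = (\<chi> i j. c * A $ i $ j)"

definition orth_projs :: "nat \<Rightarrow> (complex^'n^'n) set" where
  "orth_projs k = {P. P = cmat_adj P \<and> P ** P = P \<and> trace P = of_nat k}"

definition kNumRange :: "nat \<Rightarrow> complex^'n^'n \<Rightarrow> complex set" where
  "kNumRange k A = {trace (A ** P) | P. P \<in> orth_projs k}"

definition kNumRadius :: "nat \<Rightarrow> complex^'n^'n \<Rightarrow> real" where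
  "kNumRadius k A = Sup (cmod ` kNumRange k A)"

definition kParallel :: "nat \<Rightarrow> complex^'n^'n \<Rightarrow> complex^'n^'n \<Rightarrow> bool" where
  "kParallel k A B \<longleftrightarrow> (\<exists>\<mu>. cmod \<mu> = 1 \<and>
      kNumRadius k (A + cmat_scale \<mu> B) = kNumRadius k A + kNumRadius k B)"

definition parSet :: "nat \<Rightarrow> complex^'n^'n \<Rightarrow> (complex^'n^'n) set" where
  "parSet k A = {B. kParallel k B A}"

definition SP :: "nat \<Rightarrow> complex^'n^'n \<Rightarrow> (complex^'n^'n) set" where
  "SP k P = {B. trace (B ** P) = complex_of_real (kNumRadius k B)}"

end

theory Submission
  imports Defs
begin



lemma trace_scale: "trace (cmat_scale c X ** P) = c * trace (X ** P)"
  by (simp add: trace_def cmat_scale_def matrix_matrix_mult_def sum_distrib_left mult.assoc)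

lemma trace_addm: "trace ((X + Y) ** P) = trace (X ** P) + trace (Y ** P)"
  by (simp add: trace_def matrix_matrix_mult_def distrib_right sum.distrib)

lemma scale_comp: "cmat_scale a (cmat_scale b X) = cmat_scale (a*b) X"
  by (simp add: cmat_scale_def mult.assoc)

lemma scale_one: "cmat_scale 1 X = X"
  by (simp add: cmat_scale_def vec_eq_iff)

lemma proj_sq:
  assumes "P \<in> orth_projs k"
  shows "(\<Sum>i\<in>UNIV. \<Sum>j\<in>UNIV. (cmod (P$i$j))^2) = real k"
proof -
  have h: "P = cmat_adj P" and h2: "P ** P = P" and h3: "trace P = of_nat k"
    using assms unfolding orth_projs_def by blast+
  have adj: "P$j$i = cnj (P$i$j)" for i j
  proof -
    have "P$j$i = (cmat_adj P)$j$i" using arg_cong[OF h, of "\<lambda>M. M$j$i"] .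
    then show ?thesis unfolding cmat_adj_def by simp
  qed
  have d: "P$i$i = of_real (\<Sum>j\<in>UNIV. (cmod (P$i$j))^2)" for i
  proof -
    have "P$i$i = (P**P)$i$i" by (simp only: h2)
    also have "\<dots> = (\<Sum>j\<in>UNIV. P$i$j * cnj (P$i$j))"
      unfolding matrix_matrix_mult_def vec_lambda_beta
    proof (rule sum.cong[OF refl])
      fix j show "P$i$j*P$j$i = P$i$j*cnj(P$i$j)" by (simp only: adj[of j i])
    qed
    also have "\<dots> = (\<Sum>j\<in>UNIV. of_real ((cmod (P$i$j))^2))"
      by (simp only: complex_norm_square)
    finally show ?thesis by simp
  qed
  have "of_nat k = trace P" by (simp only: h3)
  also have "\<dots> = of_real (\<Sum>i\<in>UNIV. \<Sum>j\<in>UNIV. (cmod (P$i$j))^2)"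
    unfolding trace_def d by simp
  finally have "complex_of_real (real k) = complex_of_real (\<Sum>i\<in>UNIV. \<Sum>j\<in>UNIV. (cmod (P$i$j))^2)"
    by simp
  then have "real k = (\<Sum>i\<in>UNIV. \<Sum>j\<in>UNIV. (cmod (P$i$j))^2)" by (simp only: of_real_eq_iff)
  then show ?thesis by (rule sym)
qed

lemma proj_bounded: "bounded (orth_projs k :: (complex^'n^'n) set)"
proof -
  have "norm P \<le> real (CARD('n)) * real (CARD('n)) * (real k + 1)" if "P \<in> orth_projs k" for P :: "complex^'n^'n"
  proof -
    have e: "cmod (P$i$j) \<le> real k + 1" for i j
    proof -
      have "(cmod (P$i$j))^2 \<le> (\<Sum>j\<in>UNIV. (cmod (P$i$j))^2)"
        by (rule member_le_sum) auto
      also have "\<dots> \<le> (\<Sum>i\<in>UNIV. \<Sum>j\<in>UNIV. (cmod (P$i$j))^2)"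
        by (rule member_le_sum[where f="\<lambda>i. \<Sum>j\<in>UNIV. (cmod (P$i$j))^2"]) (auto intro: sum_nonneg)
      finally have "(cmod (P$i$j))^2 \<le> real k" using proj_sq[OF that] by simp
      moreover have "0 \<le> (cmod (P$i$j) - 1)^2" by simp
      ultimately show ?thesis unfolding power2_diff by simp
    qed
    have r: "norm (P$i) \<le> real (CARD('n)) * (real k + 1)" for i
    proof -
      have "norm (P$i) \<le> (\<Sum>j\<in>UNIV. cmod (P$i$j))"
        unfolding norm_vec_def by (rule L2_set_le_sum) auto
      also have "\<dots> \<le> (\<Sum>j\<in>(UNIV::'n set). real k + 1)" by (rule sum_mono) (rule e)
      finally show ?thesis by simp
    qed
    have "norm P \<le> (\<Sum>i\<in>UNIV. norm (P$i))"
      unfolding norm_vec_def by (rule L2_set_le_sum) auto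
    also have "\<dots> \<le> (\<Sum>i\<in>(UNIV::'n set). real (CARD('n)) * (real k + 1))" by (rule sum_mono) (rule r)
    finally show ?thesis by simp
  qed
  then show ?thesis unfolding bounded_iff by blast
qed

lemma proj_closed: "closed (orth_projs k :: (complex^'n^'n) set)"
proof -
  have cc: "continuous_on UNIV (\<lambda>P::complex^'n^'n. P $ i $ j)" for i j
    by (intro continuous_on_component continuous_on_id)
  have c1: "continuous_on UNIV (cmat_adj :: complex^'n^'n \<Rightarrow> _)"
    unfolding cmat_adj_def by (intro continuous_on_vec_lambda continuous_on_cnj cc)
  have c2: "continuous_on UNIV (\<lambda>P::complex^'n^'n. P ** P)"
    unfolding matrix_matrix_mult_def by (intro continuous_on_vec_lambda continuous_on_sum continuous_on_mult cc)
  have c3: "continuous_on UNIV (trace :: complex^'n^'n \<Rightarrow> _)"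
    unfolding trace_def by (intro continuous_on_sum cc)
  have "orth_projs k = {P. P = cmat_adj P} \<inter> {P. P ** P = P} \<inter> {P::complex^'n^'n. trace P = of_nat k}"
    unfolding orth_projs_def by blast
  also have "closed \<dots>"
    by (intro closed_Int closed_Collect_eq continuous_on_id c1 c2 c3 continuous_on_const)
  finally show ?thesis .
qed


lemma proj_nonempty:
  assumes "k \<le> CARD('n)"
  shows "orth_projs k \<noteq> ({} :: (complex^'n^'n) set)"
proof -
  obtain S :: "'n set" where S: "S \<subseteq> UNIV" "card S = k"
    using obtain_subset_with_card_n[of k "UNIV::'n set"] assms by auto
  define P :: "complex^'n^'n" where "P = (\<chi> i j. if i = j \<and> i \<in> S then 1 else 0)"
  have "P = cmat_adj P" unfolding P_def cmat_adj_def by (simp add: vec_eq_iff)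
  moreover have "P ** P = P"
  proof -
    have "(\<Sum>l\<in>UNIV. (if i=l\<and>i\<in>S then 1 else 0)*(if l=j\<and>l\<in>S then 1 else 0))
       = (\<Sum>l\<in>UNIV. if l = i then (if i=j \<and> i\<in>S then 1 else 0) else (0::complex))" for i j
      by (rule sum.cong) auto
    then show ?thesis unfolding P_def matrix_matrix_mult_def by (simp add: vec_eq_iff)
  qed
  moreover have "trace P = of_nat k"
    unfolding P_def trace_def using S by (simp add: sum.If_cases)
  ultimately have "P \<in> orth_projs k" unfolding orth_projs_def by blast
  then show ?thesis by blast
qed

lemma cont_tr: "continuous_on S (\<lambda>P::complex^'n^'n. cmod (trace (M ** P)))"
proof -
  have cc: "continuous_on S (\<lambda>P::complex^'n^'n. P $ i $ j)" for i j
    by (intro continuous_on_component continuous_on_id)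
  have e: "(\<lambda>P::complex^'n^'n. cmod (trace (M ** P))) = (\<lambda>P. cmod (\<Sum>i\<in>UNIV. \<Sum>l\<in>UNIV. M$i$l * P$l$i))"
    by (simp add: trace_def matrix_matrix_mult_def)
  show ?thesis unfolding e
    by (intro continuous_on_norm continuous_on_sum continuous_on_mult continuous_on_const cc)
qed

lemma attain:
  assumes "k \<le> CARD('n)"
  shows "\<exists>P\<in>orth_projs k. kNumRadius k M = cmod (trace (M ** P)) \<and>
     (\<forall>Q\<in>orth_projs k. cmod (trace (M ** Q)) \<le> kNumRadius k (M::complex^'n^'n))"
proof -
  have "compact (orth_projs k :: (complex^'n^'n) set)"
    using proj_bounded proj_closed compact_eq_bounded_closed by blast
  then obtain P where P: "P \<in> orth_projs k" and mx: "\<forall>Q\<in>orth_projs k. cmod (trace (M ** Q)) \<le> cmod (trace (M ** P))"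
    using continuous_attains_sup[OF _ proj_nonempty[OF assms] cont_tr] by blast
  have im: "cmod ` kNumRange k M = (\<lambda>Q. cmod (trace (M ** Q))) ` orth_projs k"
    unfolding kNumRange_def by auto
  have "kNumRadius k M = cmod (trace (M ** P))"
    unfolding kNumRadius_def im
    by (rule cSup_eq_maximum) (use P mx in auto)
  then show ?thesis using P mx by auto
qed

lemma radius_scale:
  assumes "k \<le> CARD('n)"
  shows "kNumRadius k (cmat_scale c M) = cmod c * kNumRadius k (M::complex^'n^'n)"
proof -
  obtain P where P: "P \<in> orth_projs k" "kNumRadius k M = cmod (trace (M ** P))"
    and b: "\<forall>Q\<in>orth_projs k. cmod (trace (M ** Q)) \<le> kNumRadius k M"
    using attain[OF assms] by blast
  obtain P1 where P1: "P1 \<in> orth_projs k" "kNumRadius k (cmat_scale c M) = cmod (trace (cmat_scale c M ** P1))"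
    and b1: "\<forall>Q\<in>orth_projs k. cmod (trace (cmat_scale c M ** Q)) \<le> kNumRadius k (cmat_scale c M)"
    using attain[OF assms] by blast
  have "cmod c * kNumRadius k M \<le> kNumRadius k (cmat_scale c M)"
    using b1 P by (auto simp: trace_scale norm_mult)
  moreover have "kNumRadius k (cmat_scale c M) \<le> cmod c * kNumRadius k M"
    using b P1 by (auto simp: trace_scale norm_mult intro: mult_left_mono)
  ultimately show ?thesis by linarith
qed

lemma radius_add:
  assumes "k \<le> CARD('n)"
  shows "kNumRadius k (X + Y) \<le> kNumRadius k X + kNumRadius k (Y::complex^'n^'n)"
proof -
  obtain P where P: "P \<in> orth_projs k" "kNumRadius k (X+Y) = cmod (trace ((X+Y) ** P))"
    using attain[OF assms] by blast
  have "cmod (trace (X ** P)) \<le> kNumRadius k X" "cmod (trace (Y ** P)) \<le> kNumRadius k Y"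
    using attain[OF assms, of X] attain[OF assms, of Y] P(1) by blast+
  moreover have "cmod (trace ((X+Y) ** P)) \<le> cmod (trace (X ** P)) + cmod (trace (Y ** P))"
    unfolding trace_addm by (rule norm_triangle_ineq)
  ultimately show ?thesis using P by linarith
qed

lemma radius_nonneg:
  assumes "k \<le> CARD('n)"
  shows "0 \<le> kNumRadius k (M::complex^'n^'n)"
  using attain[OF assms, of M] by auto

lemma polar: "\<exists>\<theta>. 0 \<le> \<theta> \<and> \<theta> < 2*pi \<and> z = complex_of_real (cmod z) * exp (\<i> * complex_of_real \<theta>)"
  using Arg2pi[of z] unfolding is_Arg_def by blast


theorem mainTheorem3:
  fixes A :: "complex^'n^'n" and k :: nat
  assumes "1 \<le> k" and "k < CARD('n)"
  shows "parSet k A =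
    \<Union> {cmat_scale (exp (\<i> * complex_of_real \<theta>)) ` SP k P | \<theta> P.
          \<theta> \<in> {0..<2*pi} \<and> P \<in> orth_projs k \<and> cmod (trace (A ** P)) = kNumRadius k A}"
proof -
  have kn: "k \<le> CARD('n)" using assms by simp
  note rs = radius_scale[OF kn] and ra = radius_add[OF kn] and rn = radius_nonneg[OF kn]
  have ex1: "exp (\<i> * complex_of_real t) * exp (- (\<i> * complex_of_real t)) = 1" for t
    by (simp add: exp_minus)
  have nexp: "cmod (exp (\<i> * complex_of_real t)) = 1" for t by simp
  have nexp2: "cmod (exp (- (\<i> * complex_of_real t))) = 1" for t
    by (metis mult_minus_right nexp of_real_minus)
  show ?thesis
  proof (rule set_eqI, rule iffI)
    fix B assume "B \<in> parSet k A"
    then obtain \<mu> where mu: "cmod \<mu> = 1"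
      and eq: "kNumRadius k (B + cmat_scale \<mu> A) = kNumRadius k B + kNumRadius k A"
      unfolding parSet_def kParallel_def by blast
    obtain P where P: "P \<in> orth_projs k"
      and Pm: "kNumRadius k (B + cmat_scale \<mu> A) = cmod (trace ((B + cmat_scale \<mu> A) ** P))"
      using attain[OF kn] by blast
    define b where "b = trace (B ** P)"
    define a where "a = trace (A ** P)"
    have bb: "cmod b \<le> kNumRadius k B" and ab: "cmod a \<le> kNumRadius k A"
      unfolding a_def b_def using attain[OF kn, of B] attain[OF kn, of A] P by blast+
    have "cmod (b + \<mu> * a) \<le> cmod b + cmod (\<mu> * a)" by (rule norm_triangle_ineq)
    also have "cmod (\<mu> * a) = cmod a" by (simp add: norm_mult mu)
    finally have tri: "cmod (b + \<mu> * a) \<le> cmod b + cmod a" .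
    have "cmod (b + \<mu> * a) = kNumRadius k B + kNumRadius k A"
      using Pm eq unfolding a_def b_def trace_addm trace_scale by simp
    then have bq: "cmod b = kNumRadius k B" and aq: "cmod a = kNumRadius k A"
      using tri bb ab by linarith+
    obtain \<theta> where th: "0 \<le> \<theta>" "\<theta> < 2*pi" and bp: "b = complex_of_real (cmod b) * exp (\<i> * complex_of_real \<theta>)"
      using polar by blast
    define C where "C = cmat_scale (exp (- (\<i> * complex_of_real \<theta>))) B"
    have BC: "B = cmat_scale (exp (\<i> * complex_of_real \<theta>)) C"
      unfolding C_def scale_comp ex1 scale_one ..
    have "trace (C ** P) = exp (- (\<i> * complex_of_real \<theta>)) * b"
      unfolding C_def trace_scale b_def ..
    also have "\<dots> = complex_of_real (cmod b)"
      by (subst bp) (metis (no_types, lifting) ex1 mult.commute mult.left_commute mult_1_right)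
    also have "cmod b = kNumRadius k C"
      unfolding C_def rs nexp2 bq by simp
    finally have "C \<in> SP k P" unfolding SP_def by blast
    then have "B \<in> cmat_scale (exp (\<i> * complex_of_real \<theta>)) ` SP k P" using BC by blast
    moreover have "\<theta> \<in> {0..<2*pi}" using th by simp
    ultimately show "B \<in> \<Union> {cmat_scale (exp (\<i> * complex_of_real \<theta>)) ` SP k P | \<theta> P.
          \<theta> \<in> {0..<2*pi} \<and> P \<in> orth_projs k \<and> cmod (trace (A ** P)) = kNumRadius k A}"
      using P aq unfolding a_def by blast
  next
    fix B assume "B \<in> \<Union> {cmat_scale (exp (\<i> * complex_of_real \<theta>)) ` SP k P | \<theta> P.
          \<theta> \<in> {0..<2*pi} \<and> P \<in> orth_projs k \<and> cmod (trace (A ** P)) = kNumRadius k A}"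
    then obtain \<theta> P C where P: "P \<in> orth_projs k" and aq: "cmod (trace (A ** P)) = kNumRadius k A"
      and C: "C \<in> SP k P" and BC: "B = cmat_scale (exp (\<i> * complex_of_real \<theta>)) C"
      by blast
    have tc: "trace (C ** P) = complex_of_real (kNumRadius k C)" using C unfolding SP_def by blast
    have wB: "kNumRadius k B = kNumRadius k C" unfolding BC rs nexp by simp
    define a where "a = trace (A ** P)"
    obtain \<phi> where ap: "a = complex_of_real (cmod a) * exp (\<i> * complex_of_real \<phi>)"
      using polar by blast
    define \<mu> where "\<mu> = exp (\<i> * complex_of_real \<theta>) * exp (- (\<i> * complex_of_real \<phi>))"
    have mu: "cmod \<mu> = 1" unfolding \<mu>_def norm_mult nexp nexp2 by simp
    have "\<mu> * a = exp (\<i> * complex_of_real \<theta>) * complex_of_real (cmod a)"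
      unfolding \<mu>_def by (subst ap) (metis (no_types, lifting) ex1 mult.commute mult.left_commute mult_1_right)
    then have "trace ((B + cmat_scale \<mu> A) ** P) =
        exp (\<i> * complex_of_real \<theta>) * complex_of_real (kNumRadius k C + kNumRadius k A)"
      unfolding trace_addm trace_scale BC tc a_def[symmetric] aq[folded a_def]
      by (simp add: distrib_left)
    then have "cmod (trace ((B + cmat_scale \<mu> A) ** P)) = kNumRadius k C + kNumRadius k A"
      using rn[of C] rn[of A] by (simp add: norm_mult del: of_real_add add: of_real_add[symmetric])
    moreover have "cmod (trace ((B + cmat_scale \<mu> A) ** P)) \<le> kNumRadius k (B + cmat_scale \<mu> A)"
      using attain[OF kn, of "B + cmat_scale \<mu> A"] P by blast
    moreover have "kNumRadius k (B + cmat_scale \<mu> A) \<le> kNumRadius k B + kNumRadius k A"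
      using ra[of B "cmat_scale \<mu> A"] unfolding rs mu by simp
    ultimately have "kNumRadius k (B + cmat_scale \<mu> A) = kNumRadius k B + kNumRadius k A"
      using wB by linarith
    then show "B \<in> parSet k A" unfolding parSet_def kParallel_def using mu by blast
  qed
qed

end
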